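(* In the publication model, in the linear rational expectations equilibrium $P=\theta+b\varepsilon+c$ with $\varepsilon=\xi_j$, $b=\frac{\sigma_x^3}{\sigma_x^2+\sigma_y^2}$ and constant $c$, the publishing trader $j$, who knows $x_j=\theta+\sigma_x\varepsilon$ and $P$, can infer $\theta$ exactly: $\theta=\frac{\sigma_x(P-c)-b\,x_j}{\sigma_x-b}$ (note $\sigma_x-b=\frac{\sigma_x\sigma_y^2}{\sigma_x^2+\sigma_y^2}>0$), so that $\mathrm{Var}(\theta\mid x_j,P)=0$ and his demand is $k_j=\frac{\theta-P}{\gamma\sigma_\eta^2}$. In contrast, every other trader $i$ has $\mathrm{Var}(\theta\mid x_i,y_i,P)>0$. Hence trader $j$ gains an informational advantage over all other traders.
   Context: Baseline model. An asset is in aggregate supply $K>0$ and pays $\tilde\theta=\theta+\eta$, where $\eta\sim\mathcal N(0,\sigma_\eta^2)$, $\sigma_\eta>0$, is independent of everything else. A continuum of agents $i\in[0,1]$ hold a uniform (improper, uninformative) prior on $\theta$, so posteriors about $\theta$ are the Gaussian (generalized least squares) posteriors determined by the signals alone. Each agent $i$ observes a private signal $x_i=\theta+\sigma_x\xi_i$, $\sigma_x>0$, with $\xi_i\sim\mathcal N(0,1)$ i.i.d. across agents and independent of $\theta,\eta$. Agents have CARA utility $-E[e^{-\gamma k_i(\tilde\theta-P)}\mid \mathcal I_i]$ with $\gamma>0$ and information $\mathcal I_i$ (which includes the price $P$), so demand is $k_i=\frac{E[\tilde\theta\mid \mathcal I_i]-P}{\gamma\,\mathrm{Var}(\tilde\theta\mid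 \mathcal I_i)}$; the market clears when $\int_0^1k_i\,di=K$. Law-of-large-numbers convention: integrals over $i$ of idiosyncratic noise terms vanish. Publication model: a single trader $j$ publishes $x_j$; every other agent $i$ has information $\mathcal I_i=(x_i,y_i,P)$ with $y_i=x_j+\sigma_y\tau_i=\theta+\sigma_x\xi_j+\sigma_y\tau_i$, $\tau_i\sim\mathcal N(0,1)$ i.i.d., $\sigma_y>0$, independent of all other variables. Writing $\varepsilon:=\xi_j$, a linear rational expectations equilibrium is a triple $(a,b,c)$, $a\neq0$, such that when agents take $P=a\theta+b\varepsilon+c$ and form Bayesian posteriors, market clearing holds for every realization of $(\theta,\varepsilon)$ exactly at that price. Trader $j$ has measure zero, so his own demand does not affect the market-clearing price; trader $j$'s information is $\mathcal I_j=(x_j,P)$. *)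

theory Defs
  imports Complex_Main
begin

text \<open>Gaussian linear signal model with an improper uniform prior on theta.
  An agent observes n signals s_j = h_j * theta + d_j + sum_k M_j_k * u_k, where
  u_0 .. u_(m-1) are independent standard normal shocks. Under the flat prior the
  posterior of theta is the generalized-least-squares (GLS) posterior: its variance
  is the minimal variance of a linear unbiased estimator sum_j w_j (s_j - d_j)
  with sum_j w_j h_j = 1, and its mean is the value of the optimal such estimator.\<close>

definition lin_comb :: "nat \<Rightarrow> (nat \<Rightarrow> real) \<Rightarrow> (nat \<Rightarrow> real) \<Rightarrow> real" where
  "lin_comb n w v = (\<Sum>j<n. w j * v j)"

definition est_var :: "nat \<Rightarrow> nat \<Rightarrow> (nat \<Rightarrow> nat \<Rightarrow> real) \<Rightarrow> (nat \<Rightarrow> real) \<Rightarrow> real" where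
  "est_var n m M w = (\<Sum>k<m. (\<Sum>j<n. w j * M j k)^2)"

definition gls_var :: "nat \<Rightarrow> nat \<Rightarrow> (nat \<Rightarrow> real) \<Rightarrow> (nat \<Rightarrow> nat \<Rightarrow> real) \<Rightarrow> real" where
  "gls_var n m h M = Inf {est_var n m M w | w. lin_comb n w h = 1}"

definition gls_weights :: "nat \<Rightarrow> nat \<Rightarrow> (nat \<Rightarrow> real) \<Rightarrow> (nat \<Rightarrow> nat \<Rightarrow> real) \<Rightarrow> nat \<Rightarrow> real" where
  "gls_weights n m h M = (SOME w. lin_comb n w h = 1 \<and>
      (\<forall>v. lin_comb n v h = 1 \<longrightarrow> est_var n m M w \<le> est_var n m M v))"

definition gls_mean :: "nat \<Rightarrow> nat \<Rightarrow> (nat \<Rightarrow> real) \<Rightarrow> (nat \<Rightarrow> nat \<Rightarrow> real)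
    \<Rightarrow> (nat \<Rightarrow> real) \<Rightarrow> (nat \<Rightarrow> real) \<Rightarrow> real" where
  "gls_mean n m h M d s = lin_comb n (gls_weights n m h M) (\<lambda>j. s j - d j)"

definition cara_demand :: "real \<Rightarrow> real \<Rightarrow> real \<Rightarrow> real \<Rightarrow> real" where
  "cara_demand \<gamma> E V P = (E - P) / (\<gamma> * V)"

end

theory Submission
  imports Defs
begin

lemma ev3: "est_var 3 3 (\<lambda>j k. [[x, 0, 0], [0, x, y], [0, b, 0]] ! j ! k) w = (w 0 * x)^2 + (w 1 * x + w 2 * b)^2 + (w 1 * y)^2"
  by (simp add: est_var_def eval_nat_numeral lessThan_Suc algebra_simps)
lemma lc3: "lin_comb 3 w (\<lambda>_. 1) = w 0 + w 1 + w 2"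
  by (simp add: lin_comb_def eval_nat_numeral lessThan_Suc)
lemma ev2: "est_var 2 1 (\<lambda>j k. [[x], [b]] ! j ! k) w = (w 0 * x + w 1 * b)^2"
  by (simp add: est_var_def eval_nat_numeral lessThan_Suc algebra_simps)
lemma ev2': "est_var 2 (Suc 0) (\<lambda>j k. [[x], [b]] ! j ! k) w = (w 0 * x + w 1 * b)^2"
  using ev2 by simp
lemma lc2: "lin_comb 2 w (\<lambda>_. 1) = w 0 + w 1"
  by (simp add: lin_comb_def eval_nat_numeral lessThan_Suc)
lemma lm2: "lin_comb 2 w (\<lambda>j. [u, v] ! j) = w 0 * u + w 1 * v"
  by (simp add: lin_comb_def eval_nat_numeral lessThan_Suc)

lemma cs3: "((a::real)*A + b*B + c*C)^2 \<le> (a^2+b^2+c^2)*(A^2+B^2+C^2)"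
proof -
  have "(a^2+b^2+c^2)*(A^2+B^2+C^2) - (a*A + b*B + c*C)^2 = (a*B-b*A)^2+(a*C-c*A)^2+(b*C-c*B)^2"
    by (simp add: power2_eq_square algebra_simps)
  moreover have "(a*B-b*A)^2+(a*C-c*A)^2+(b*C-c*B)^2 \<ge> 0" by simp
  ultimately show ?thesis by linarith
qed

lemma var2_zero:
  assumes "x \<noteq> b"
  shows "gls_var 2 1 (\<lambda>_. 1) (\<lambda>j k. [[x], [b]] ! j ! k) = 0"
proof -
  let ?S = "{est_var 2 1 (\<lambda>j k. [[x], [b]] ! j ! k) w | w. lin_comb 2 w (\<lambda>_. 1) = 1}"
  define w :: "nat \<Rightarrow> real" where "w = (\<lambda>j. if j = 0 then - b / (x - b) else x / (x - b))"
  have d: "x - b \<noteq> 0" using assms by simp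
  have "w 0 + w 1 = 1" using d by (simp add: w_def add_divide_distrib[symmetric] diff_divide_distrib[symmetric])
  moreover have "w 0 * x + w 1 * b = 0" using d by (simp add: w_def field_simps)
  ultimately have "0 \<in> ?S" by (auto simp: lc2 ev2 ev2' intro!: exI[of _ w])
  moreover have "\<forall>y\<in>?S. 0 \<le> y" by (auto simp: ev2 ev2')
  ultimately have "Inf ?S = 0" by (intro cInf_eq_minimum) auto
  thus ?thesis by (simp add: gls_var_def)
qed

theorem proposition4:
  fixes \<sigma>x \<sigma>y \<sigma>\<eta> \<gamma> c b :: real
  assumes hx: "\<sigma>x > 0" and hy: "\<sigma>y > 0" and he: "\<sigma>\<eta> > 0" and hg: "\<gamma> > 0"
    and hb: "b = \<sigma>x ^ 3 / (\<sigma>x ^ 2 + \<sigma>y ^ 2)"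
  shows
    \<comment> \<open>sigma_x - b = sigma_x sigma_y^2/(sigma_x^2+sigma_y^2) > 0\<close>
    "\<sigma>x - b = \<sigma>x * \<sigma>y ^ 2 / (\<sigma>x ^ 2 + \<sigma>y ^ 2) \<and> \<sigma>x - b > 0
    \<comment> \<open>trader j infers theta exactly from x_j = theta + sigma_x eps and P = theta + b eps + c\<close>
    \<and> (\<forall>\<theta> \<epsilon> xj P. xj = \<theta> + \<sigma>x * \<epsilon> \<longrightarrow> P = \<theta> + b * \<epsilon> + c \<longrightarrow>
         \<theta> = (\<sigma>x * (P - c) - b * xj) / (\<sigma>x - b))
    \<comment> \<open>Var(theta | x_j, P) = 0; signals (x_j, P), single noise eps\<close>
    \<and> gls_var 2 1 (\<lambda>_. 1) (\<lambda>j k. [[\<sigma>x], [b]] ! j ! k) = 0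
    \<comment> \<open>demand of trader j: E[theta~|I_j] = E[theta|I_j], Var(theta~|I_j) = Var(theta|I_j) + sigma_eta^2\<close>
    \<and> (\<forall>\<theta> \<epsilon> xj P. xj = \<theta> + \<sigma>x * \<epsilon> \<longrightarrow> P = \<theta> + b * \<epsilon> + c \<longrightarrow>
         cara_demand \<gamma>
           (gls_mean 2 1 (\<lambda>_. 1) (\<lambda>j k. [[\<sigma>x], [b]] ! j ! k) (\<lambda>j. [0, c] ! j)
              (\<lambda>j. [xj, P] ! j))
           (gls_var 2 1 (\<lambda>_. 1) (\<lambda>j k. [[\<sigma>x], [b]] ! j ! k) + \<sigma>\<eta> ^ 2)
           P
         = (\<theta> - P) / (\<gamma> * \<sigma>\<eta> ^ 2))
    \<comment> \<open>Var(theta | x_i, y_i, P) > 0; signals (x_i, y_i, P), noises (xi_i, eps, tau_i)\<close>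
    \<and> gls_var 3 3 (\<lambda>_. 1)
        (\<lambda>j k. [[\<sigma>x, 0, 0], [0, \<sigma>x, \<sigma>y], [0, b, 0]] ! j ! k) > 0"
  proof -
  have s2: "\<sigma>x ^ 2 + \<sigma>y ^ 2 > 0" using hx by (simp add: add_pos_nonneg)
  have bpos: "b > 0" using hb hx s2 by simp
  have e1: "\<sigma>x - b = \<sigma>x * \<sigma>y ^ 2 / (\<sigma>x ^ 2 + \<sigma>y ^ 2)"
  proof -
    have "\<sigma>x * \<sigma>x + \<sigma>y * \<sigma>y \<noteq> 0" using s2 hx by (simp add: power2_eq_square)
    thus ?thesis using hb by (simp add: field_simps power2_eq_square power3_eq_cube)
  qed
  have e2: "\<sigma>x - b > 0" using e1 hx hy s2 by simp
  have e3: "\<forall>\<theta> \<epsilon> xj P. xj = \<theta> + \<sigma>x * \<epsilon> \<longrightarrow> P = \<theta> + b * \<epsilon> + c \<longrightarrow>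
         \<theta> = (\<sigma>x * (P - c) - b * xj) / (\<sigma>x - b)"
    using e2 by (auto simp: field_simps)
  have v0: "gls_var 2 1 (\<lambda>_. 1) (\<lambda>j k. [[\<sigma>x], [b]] ! j ! k) = 0"
    using e2 by (intro var2_zero) simp
  let ?M = "(\<lambda>j k. [[\<sigma>x], [b]] ! j ! k) :: nat \<Rightarrow> nat \<Rightarrow> real"
  let ?W = "gls_weights 2 1 (\<lambda>_. 1) ?M"
  have ex: "\<exists>w. lin_comb 2 w (\<lambda>_. 1) = 1 \<and> (\<forall>v. lin_comb 2 v (\<lambda>_. 1) = 1 \<longrightarrow> est_var 2 1 ?M w \<le> est_var 2 1 ?M v)"
  proof -
    define w :: "nat \<Rightarrow> real" where "w = (\<lambda>j. if j = 0 then - b / (\<sigma>x - b) else \<sigma>x / (\<sigma>x - b))"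
    have d: "\<sigma>x - b \<noteq> 0" using e2 by simp
    have "w 0 + w 1 = 1" using d by (simp add: w_def add_divide_distrib[symmetric] diff_divide_distrib[symmetric])
    moreover have "w 0 * \<sigma>x + w 1 * b = 0" using d by (simp add: w_def field_simps)
    ultimately show ?thesis
      by (auto simp: lc2 ev2 ev2' intro!: exI[of _ w])
  qed
  have W: "lin_comb 2 ?W (\<lambda>_. 1) = 1 \<and> (\<forall>v. lin_comb 2 v (\<lambda>_. 1) = 1 \<longrightarrow> est_var 2 1 ?M ?W \<le> est_var 2 1 ?M v)"
    unfolding gls_weights_def by (rule someI_ex[OF ex])
  have Wsum: "?W 0 + ?W 1 = 1" using W by (simp add: lc2)
  have Wz: "?W 0 * \<sigma>x + ?W 1 * b = 0"
  proof -
    define w :: "nat \<Rightarrow> real" where "w = (\<lambda>j. if j = 0 then - b / (\<sigma>x - b) else \<sigma>x / (\<sigma>x - b))"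
    have d: "\<sigma>x - b \<noteq> 0" using e2 by simp
    have "w 0 + w 1 = 1" using d by (simp add: w_def add_divide_distrib[symmetric] diff_divide_distrib[symmetric])
    moreover have "w 0 * \<sigma>x + w 1 * b = 0" using d by (simp add: w_def field_simps)
    ultimately have "(?W 0 * \<sigma>x + ?W 1 * b)^2 \<le> 0" using W by (fastforce simp: lc2 ev2 ev2')
    thus ?thesis by simp
  qed
  have e4: "\<forall>\<theta> \<epsilon> xj P. xj = \<theta> + \<sigma>x * \<epsilon> \<longrightarrow> P = \<theta> + b * \<epsilon> + c \<longrightarrow>
         cara_demand \<gamma>
           (gls_mean 2 1 (\<lambda>_. 1) ?M (\<lambda>j. [0, c] ! j) (\<lambda>j. [xj, P] ! j))
           (gls_var 2 1 (\<lambda>_. 1) ?M + \<sigma>\<eta> ^ 2) P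
         = (\<theta> - P) / (\<gamma> * \<sigma>\<eta> ^ 2)"
  proof (intro allI impI)
    fix \<theta> \<epsilon> xj P
    assume a: "xj = \<theta> + \<sigma>x * \<epsilon>" "P = \<theta> + b * \<epsilon> + c"
    have "gls_mean 2 1 (\<lambda>_. 1) ?M (\<lambda>j. [0, c] ! j) (\<lambda>j. [xj, P] ! j) = ?W 0 * xj + ?W 1 * (P - c)"
      by (simp add: gls_mean_def lin_comb_def eval_nat_numeral lessThan_Suc)
    also have "\<dots> = (?W 0 + ?W 1) * \<theta> + \<epsilon> * (?W 0 * \<sigma>x + ?W 1 * b)" using a by (simp add: algebra_simps)
    also have "\<dots> = \<theta>" using Wsum Wz by simp
    finally show "cara_demand \<gamma> (gls_mean 2 1 (\<lambda>_. 1) ?M (\<lambda>j. [0, c] ! j) (\<lambda>j. [xj, P] ! j))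
           (gls_var 2 1 (\<lambda>_. 1) ?M + \<sigma>\<eta> ^ 2) P = (\<theta> - P) / (\<gamma> * \<sigma>\<eta> ^ 2)"
      using v0 by (simp add: cara_demand_def)
  qed
  define \<alpha> where "\<alpha> = 1 / \<sigma>x"
  define \<beta> where "\<beta> = 1 / \<sigma>y - \<sigma>x / (\<sigma>y * b)"
  define \<delta> where "\<delta> = 1 / b"
  define L where "L = 1 / (\<alpha>^2 + \<beta>^2 + \<delta>^2)"
  have Spos: "\<alpha>^2 + \<beta>^2 + \<delta>^2 > 0" using hx by (simp add: \<alpha>_def add_pos_nonneg)
  have Lpos: "L > 0" using Spos by (simp add: L_def)
  let ?S = "{est_var 3 3 (\<lambda>j k. [[\<sigma>x, 0, 0], [0, \<sigma>x, \<sigma>y], [0, b, 0]] ! j ! k) w | w. lin_comb 3 w (\<lambda>_. 1) = 1}"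
  have bound: "L \<le> y" if "y \<in> ?S" for y
  proof -
    obtain w :: "nat \<Rightarrow> real" where w: "w 0 + w 1 + w 2 = 1" and y: "y = (w 0 * \<sigma>x)^2 + (w 1 * \<sigma>x + w 2 * b)^2 + (w 1 * \<sigma>y)^2"
      using \<open>y \<in> ?S\<close> by (auto simp: ev3 lc3)
    have "\<alpha> * (w 0 * \<sigma>x) + \<beta> * (w 1 * \<sigma>y) + \<delta> * (w 1 * \<sigma>x + w 2 * b) = w 0 + w 1 + w 2"
      using hx hy bpos by (simp add: \<alpha>_def \<beta>_def \<delta>_def field_simps)
    hence "1 \<le> (\<alpha>^2 + \<beta>^2 + \<delta>^2) * y"
      using cs3[of \<alpha> "w 0 * \<sigma>x" \<beta> "w 1 * \<sigma>y" \<delta> "w 1 * \<sigma>x + w 2 * b"] w y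
      by (simp add: algebra_simps)
    thus ?thesis using Spos by (simp add: L_def field_simps)
  qed
  have ne: "?S \<noteq> {}"
    by (rule ccontr) (auto simp: lc3 dest: spec[of _ "\<lambda>_. 1/3"])
  have "L \<le> Inf ?S" using ne bound by (intro cInf_greatest) auto
  hence e5: "gls_var 3 3 (\<lambda>_. 1) (\<lambda>j k. [[\<sigma>x, 0, 0], [0, \<sigma>x, \<sigma>y], [0, b, 0]] ! j ! k) > 0"
    using Lpos by (simp add: gls_var_def)
  show ?thesis using e1 e2 e3 v0 e4 e5 by blast
qed

end
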